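(* Let $G=(V,E)$ be a simple graph with $|V|=n$, adjacency matrix $A$, and $D$ the diagonal matrix of vertex degrees. Then $$\alpha(G)=\max\{\mathbf{e}^\top x \mid x\in\{0,1\}^n,\ 0\leq (A+I)x-\mathbf{e}\leq (D-I)(\mathbf{e}-x)\},$$ where $I$ is the $n\times n$ identity and $\mathbf{e}$ the all-ones vector.
   Context: $\alpha(G)$ is the maximum cardinality of an independent set of $G$. Vector inequalities are componentwise. *)

theory Defs
  imports "HOL-Analysis.Analysis"
begin

definition simple_graph :: "('n \<Rightarrow> 'n \<Rightarrow> bool) \<Rightarrow> bool" where
  "simple_graph E \<longleftrightarrow> (\<forall>u v. E u v \<longrightarrow> E v u) \<and> (\<forall>v. \<not> E v v)"

definition independent_set :: "('n \<Rightarrow> 'n \<Rightarrow> bool) \<Rightarrow> 'n set \<Rightarrow> bool" where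
  "independent_set E S \<longleftrightarrow> (\<forall>u\<in>S. \<forall>v\<in>S. \<not> E u v)"

definition alpha :: "('n::finite \<Rightarrow> 'n \<Rightarrow> bool) \<Rightarrow> nat" where
  "alpha E = Max {card S | S. independent_set E S}"

definition adj_matrix :: "('n::finite \<Rightarrow> 'n \<Rightarrow> bool) \<Rightarrow> real^'n^'n" where
  "adj_matrix E = (\<chi> i j. if E i j then 1 else 0)"

definition degree :: "('n::finite \<Rightarrow> 'n \<Rightarrow> bool) \<Rightarrow> 'n \<Rightarrow> nat" where
  "degree E v = card {u. E v u}"

definition degree_matrix :: "('n::finite \<Rightarrow> 'n \<Rightarrow> bool) \<Rightarrow> real^'n^'n" where
  "degree_matrix E = (\<chi> i j. if i = j then real (degree E i) else 0)"

end

theory Submission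
  imports Defs
begin

lemma AI_comp:
  fixes E :: "'n::finite \<Rightarrow> 'n \<Rightarrow> bool"
  shows "((adj_matrix E + mat 1) *v x) $ i = x $ i + (\<Sum>j\<in>{j. E i j}. x $ j)"
proof -
  have "((adj_matrix E + mat 1) *v x) $ i =
        (\<Sum>j\<in>UNIV. (if E i j then x $ j else 0)) + (\<Sum>j\<in>UNIV. (if i = j then x $ j else 0))"
    unfolding matrix_vector_mult_def sum.distrib[symmetric] vec_lambda_beta
    by (rule sum.cong) (auto simp: adj_matrix_def mat_def)
  also have "\<dots> = x $ i + (\<Sum>j\<in>{j. E i j}. x $ j)"
    by (simp add: sum.If_cases)
  finally show ?thesis .
qed

lemma DI_comp:
  fixes E :: "'n::finite \<Rightarrow> 'n \<Rightarrow> bool"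
  shows "((degree_matrix E - mat 1) *v y) $ i = (real (degree E i) - 1) * y $ i"
proof -
  have "((degree_matrix E - mat 1) *v y) $ i =
        (\<Sum>j\<in>UNIV. (if i = j then (real (degree E i) - 1) * y $ j else 0))"
    unfolding matrix_vector_mult_def vec_lambda_beta
    by (rule sum.cong) (auto simp: degree_matrix_def mat_def)
  also have "\<dots> = (real (degree E i) - 1) * y $ i" by simp
  finally show ?thesis .
qed

lemma dot1: "(1::real^'n::finite) \<bullet> x = (\<Sum>i\<in>UNIV. x $ i)"
  by (simp add: inner_vec_def)

theorem theorem4:
  fixes E :: "'n::finite \<Rightarrow> 'n \<Rightarrow> bool"
  assumes "simple_graph E"
  shows "real (alpha E) =
    Max {(1::real^'n) \<bullet> x | x.
           (\<forall>i. x $ i \<in> {0, 1}) \<and>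
           0 \<le> (adj_matrix E + mat 1) *v x - 1 \<and>
           (adj_matrix E + mat 1) *v x - 1 \<le> (degree_matrix E - mat 1) *v (1 - x)}"
  (is "_ = Max ?F")
proof -
  have sym: "\<And>u v. E u v \<Longrightarrow> E v u" and irr: "\<And>v. \<not> E v v"
    using assms by (auto simp: simple_graph_def)
  define xs :: "'n set \<Rightarrow> real^'n" where "xs S = (\<chi> i. if i \<in> S then 1 else 0)" for S
  have cardx: "(1::real^'n) \<bullet> xs S = real (card S)" for S
  proof -
    have "(1::real^'n) \<bullet> xs S = (\<Sum>i\<in>UNIV. if i \<in> S then 1 else 0)"
      by (simp add: dot1 xs_def)
    also have "\<dots> = real (card S)" by (simp add: sum.If_cases)
    finally show ?thesis .
  qed
  have feas_rep: "\<exists>S. x = xs S" if "\<forall>i. x $ i \<in> {0, 1::real}" for x :: "real^'n"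
  proof (intro exI)
    show "x = xs {i. x $ i = 1}" using that by (auto simp: xs_def vec_eq_iff)
  qed
  have indep: "independent_set E S" if "xs S \<in> {x.
           (\<forall>i. x $ i \<in> {0, 1}) \<and>
           0 \<le> (adj_matrix E + mat 1) *v x - 1 \<and>
           (adj_matrix E + mat 1) *v x - 1 \<le> (degree_matrix E - mat 1) *v (1 - x)}" for S
  proof -
    have up: "\<And>i. ((adj_matrix E + mat 1) *v xs S) $ i - 1 \<le> ((degree_matrix E - mat 1) *v (1 - xs S)) $ i"
      using that by (auto simp: less_eq_vec_def)
    show ?thesis unfolding independent_set_def
    proof (intro ballI notI)
      fix u v assume u: "u \<in> S" and v: "v \<in> S" and e: "E u v"
      have "xs S $ u + (\<Sum>j\<in>{j. E u j}. xs S $ j) - 1 \<le> 0"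
        using up[of u] u by (simp add: AI_comp DI_comp xs_def)
      hence "(\<Sum>j\<in>{j. E u j}. xs S $ j) \<le> 0" using u by (simp add: xs_def)
      moreover have "xs S $ v \<le> (\<Sum>j\<in>{j. E u j}. xs S $ j)"
        by (rule member_le_sum) (use e in \<open>auto simp: xs_def\<close>)
      ultimately show False using v by (simp add: xs_def)
    qed
  qed
  have feas: "xs S \<in> {x.
           (\<forall>i. x $ i \<in> {0, 1}) \<and>
           0 \<le> (adj_matrix E + mat 1) *v x - 1 \<and>
           (adj_matrix E + mat 1) *v x - 1 \<le> (degree_matrix E - mat 1) *v (1 - x)}"
    if ind: "independent_set E S" and dom: "\<forall>i. i \<notin> S \<longrightarrow> (\<exists>j\<in>S. E i j)" for S
  proof -
    have nn: "0 \<le> (\<Sum>j\<in>{j. E i j}. xs S $ j)" for i by (rule sum_nonneg) (simp add: xs_def)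
    have lo: "1 \<le> xs S $ i + (\<Sum>j\<in>{j. E i j}. xs S $ j)" for i
    proof (cases "i \<in> S")
      case True thus ?thesis using nn[of i] by (simp add: xs_def)
    next
      case False
      then obtain j where j: "j \<in> S" "E i j" using dom by blast
      have "xs S $ j \<le> (\<Sum>j\<in>{j. E i j}. xs S $ j)"
        by (rule member_le_sum) (use j in \<open>auto simp: xs_def\<close>)
      thus ?thesis using j by (simp add: xs_def)
    qed
    have hi: "xs S $ i + (\<Sum>j\<in>{j. E i j}. xs S $ j) - 1 \<le> (real (degree E i) - 1) * (1 - xs S $ i)" for i
    proof (cases "i \<in> S")
      case True
      have "(\<Sum>j\<in>{j. E i j}. xs S $ j) = 0"
        by (rule sum.neutral) (use True ind in \<open>auto simp: xs_def independent_set_def\<close>)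
      thus ?thesis using True by (simp add: xs_def)
    next
      case False
      have "(\<Sum>j\<in>{j. E i j}. xs S $ j) \<le> (\<Sum>j\<in>{j. E i j}. 1)"
        by (rule sum_mono) (simp add: xs_def)
      hence "(\<Sum>j\<in>{j. E i j}. xs S $ j) \<le> real (degree E i)" by (simp add: degree_def)
      thus ?thesis using False by (simp add: xs_def)
    qed
    show ?thesis using lo hi
      by (auto simp: less_eq_vec_def AI_comp DI_comp) (auto simp: xs_def)
  qed
  have Fsub: "?F \<subseteq> (\<lambda>S::'n set. real (card S)) ` UNIV"
  proof
    fix v assume "v \<in> ?F"
    then obtain x :: "real^'n" where x: "v = 1 \<bullet> x" "\<forall>i. x $ i \<in> {0, 1::real}" by blast
    then obtain S where "x = xs S" using feas_rep by blast
    thus "v \<in> (\<lambda>S::'n set. real (card S)) ` UNIV" using x cardx by (intro image_eqI[of _ _ S]) auto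
  qed
  have finF: "finite ?F" by (rule finite_subset[OF Fsub]) simp
  define I where "I = {card S | S. independent_set E S}"
  have finI: "finite I" unfolding I_def
    by (rule finite_subset[of _ "card ` UNIV"]) auto
  have "card {} \<in> I" unfolding I_def by (auto simp: independent_set_def)
  hence "Max I \<in> I" using finI by (intro Max_in) auto
  then obtain S0 where S0: "independent_set E S0" "card S0 = alpha E"
    unfolding I_def alpha_def by auto
  have le_alpha: "card S \<le> alpha E" if "independent_set E S" for S
    unfolding alpha_def using finI that I_def by (auto intro: Max_ge)
  have dom: "\<forall>i. i \<notin> S0 \<longrightarrow> (\<exists>j\<in>S0. E i j)"
  proof (intro allI impI, rule ccontr)
    fix i assume i: "i \<notin> S0" and n: "\<not> (\<exists>j\<in>S0. E i j)"
    have "independent_set E (insert i S0)"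
      using S0(1) n irr sym unfolding independent_set_def by blast
    hence "card (insert i S0) \<le> alpha E" by (rule le_alpha)
    moreover have "card (insert i S0) = Suc (card S0)" using i by simp
    ultimately show False using S0(2) by simp
  qed
  have inF: "real (alpha E) \<in> ?F"
  proof -
    have "xs S0 \<in> {x.
           (\<forall>i. x $ i \<in> {0, 1}) \<and>
           0 \<le> (adj_matrix E + mat 1) *v x - 1 \<and>
           (adj_matrix E + mat 1) *v x - 1 \<le> (degree_matrix E - mat 1) *v (1 - x)}"
      by (rule feas[OF S0(1) dom])
    hence "1 \<bullet> xs S0 \<in> ?F" by blast
    thus ?thesis using cardx[of S0] S0(2) by simp
  qed
  have geF: "v \<le> real (alpha E)" if "v \<in> ?F" for v
  proof -
    obtain x where x: "v = 1 \<bullet> x" "x \<in> {x.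
           (\<forall>i. x $ i \<in> {0, 1}) \<and>
           0 \<le> (adj_matrix E + mat 1) *v x - 1 \<and>
           (adj_matrix E + mat 1) *v x - 1 \<le> (degree_matrix E - mat 1) *v (1 - x)}"
      using \<open>v \<in> ?F\<close> by blast
    then obtain S where S: "x = xs S" using feas_rep by blast
    have "independent_set E S" using indep x(2) S by simp
    hence "card S \<le> alpha E" by (rule le_alpha)
    thus ?thesis using x(1) S cardx by simp
  qed
  show ?thesis
    by (rule HOL.sym[OF Max_eqI[OF finF geF inF]]) 
qed

end
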